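(* For each $n\in\mathbb{N}$, let $\ell_n\in\mathcal{D}^-[0,\infty)$, $r_n\in\mathcal{D}^+[0,\infty)$ with $\ell_n\le r_n$, and let $\psi_n\in\mathcal{D}[0,\infty)$. Suppose there exist $\ell\in\mathcal{D}^-[0,\infty)$, $r\in\mathcal{D}^+[0,\infty)$ and $\psi\in\mathcal{D}[0,\infty)$ such that $\psi_n\to\psi$, $\ell_n\to\ell$ and $r_n\to r$ uniformly on compacts as $n\to\infty$. Suppose for each $n$, $(\phi_n,\eta_n)$ solves the ESP on $[\ell_n(\cdot),r_n(\cdot)]$ for $\psi_n$. If $\phi_n\to\phi$ uniformly on compacts, then $(\phi,\phi-\psi)$ solves the ESP on $[\ell(\cdot),r(\cdot)]$ for $\psi$.
   Context: $\mathcal{D}[0,\infty)$ denotes the càdlàg functions $[0,\infty)\to(-\infty,\infty)$; $\mathcal{D}^-[0,\infty)$ (resp. $\mathcal{D}^+[0,\infty)$) denotes càdlàg functions with values in $[-\infty,\infty)$ (resp. $(-\infty,\infty]$). $f_n\to f$ uniformly on compacts means $\sup_{s\in[0,T]}|f_n(s)-f(s)|\to0$ for every $T<\infty$. ESP: given $\ell\in\mathcal{D}^-[0,\infty)$, $r\in\mathcal{D}^+[0,\infty)$ with $\ell\le r$ and $\psi\in\mathcal{D}[0,\infty)$, $(\phi,\eta)\in\mathcal{D}[0,\infty)^2$ solves the ESP on $[\ell(\cdot),r(\cdot)]$ for $\psi$ if (1) $\phi(t)=\psi(t)+\eta(t)\in[\ell(t),r(t)]$ for all $t\ge0$; (2)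 for all $0\le s\le t$: $\eta(t)-\eta(s)\ge0$ if $\phi(u)<r(u)$ for all $u\in(s,t]$, and $\eta(t)-\eta(s)\le0$ if $\phi(u)>\ell(u)$ for all $u\in(s,t]$; (3) for all $t\ge0$: $\eta(t)-\eta(t-)\ge0$ if $\phi(t)<r(t)$, and $\eta(t)-\eta(t-)\le0$ if $\phi(t)>\ell(t)$, where $\eta(0-)=0$. *)

theory Defs
  imports "HOL-Analysis.Analysis"
begin

text \<open>Real-valued cadlag functions on [0,oo): right-continuous at every t >= 0,
  left limit (in the reals) at every t > 0. Values at negative arguments are irrelevant.\<close>
definition cadlag :: "(real \<Rightarrow> real) \<Rightarrow> bool" where
  "cadlag f \<longleftrightarrow>
     (\<forall>t\<ge>0. continuous (at_right t) f) \<and>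
     (\<forall>t>0. \<exists>L. (f \<longlongrightarrow> L) (at_left t))"

definition cadlag_minus :: "(real \<Rightarrow> ereal) \<Rightarrow> bool" where
  "cadlag_minus f \<longleftrightarrow>
     (\<forall>t\<ge>0. f t \<noteq> \<infinity>) \<and>
     (\<forall>t\<ge>0. continuous (at_right t) f) \<and>
     (\<forall>t>0. \<exists>L. L \<noteq> \<infinity> \<and> (f \<longlongrightarrow> L) (at_left t))"

definition cadlag_plus :: "(real \<Rightarrow> ereal) \<Rightarrow> bool" where
  "cadlag_plus f \<longleftrightarrow>
     (\<forall>t\<ge>0. f t \<noteq> -\<infinity>) \<and>
     (\<forall>t\<ge>0. continuous (at_right t) f) \<and>
     (\<forall>t>0. \<exists>L. L \<noteq> -\<infinity> \<and> (f \<longlongrightarrow> L) (at_left t))"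

definition ucc :: "(nat \<Rightarrow> real \<Rightarrow> real) \<Rightarrow> (real \<Rightarrow> real) \<Rightarrow> bool" where
  "ucc fs f \<longleftrightarrow> (\<forall>T. \<forall>\<epsilon>>0. \<forall>\<^sub>F n in sequentially. \<forall>s\<in>{0..T}. \<bar>fs n s - f s\<bar> < \<epsilon>)"

text \<open>Distance on extended reals with the convention |a - a| = 0 (also for infinite a),
  |a - b| = oo if a /= b and one of them is infinite.\<close>
definition edist :: "ereal \<Rightarrow> ereal \<Rightarrow> ereal" where
  "edist a b = (if a = b then 0 else if \<bar>a\<bar> \<noteq> \<infinity> \<and> \<bar>b\<bar> \<noteq> \<infinity> then \<bar>a - b\<bar> else \<infinity>)"

definition ucc_ereal :: "(nat \<Rightarrow> real \<Rightarrow> ereal) \<Rightarrow> (real \<Rightarrow> ereal) \<Rightarrow> bool" where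
  "ucc_ereal fs f \<longleftrightarrow>
     (\<forall>T. \<forall>\<epsilon>>0. \<forall>\<^sub>F n in sequentially. \<forall>s\<in>{0..T}. edist (fs n s) (f s) < ereal \<epsilon>)"

text \<open>Extended Skorokhod problem on [l(.), r(.)] for psi; eta(0-) = 0.\<close>
definition ESP :: "(real \<Rightarrow> ereal) \<Rightarrow> (real \<Rightarrow> ereal) \<Rightarrow> (real \<Rightarrow> real)
                   \<Rightarrow> (real \<Rightarrow> real) \<Rightarrow> (real \<Rightarrow> real) \<Rightarrow> bool" where
  "ESP l r psi phi eta \<longleftrightarrow>
     cadlag phi \<and> cadlag eta \<and>
     (\<forall>t\<ge>0. phi t = psi t + eta t \<and> l t \<le> ereal (phi t) \<and> ereal (phi t) \<le> r t) \<and>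
     (\<forall>s t. 0 \<le> s \<and> s \<le> t \<longrightarrow>
        ((\<forall>u\<in>{s<..t}. ereal (phi u) < r u) \<longrightarrow> eta t - eta s \<ge> 0) \<and>
        ((\<forall>u\<in>{s<..t}. ereal (phi u) > l u) \<longrightarrow> eta t - eta s \<le> 0)) \<and>
     (\<forall>t\<ge>0. let jump = eta t - (if t = 0 then 0 else Lim (at_left t) eta) in
        (ereal (phi t) < r t \<longrightarrow> jump \<ge> 0) \<and>
        (ereal (phi t) > l t \<longrightarrow> jump \<le> 0))"

end

theory Submission
  imports Defs
begin

lemma edist_uminus: "edist (-a) (-b) = edist a b"
  by (cases a; cases b) (auto simp: edist_def abs_minus_commute)

lemma edist_lt_real: "edist x (ereal q) < ereal e \<Longrightarrow> \<exists>x'. x = ereal x' \<and> \<bar>x' - q\<bar> < e"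
  by (cases x) (auto simp: edist_def split: if_splits)

lemma edist_lt_pinf: "edist x \<infinity> < ereal e \<Longrightarrow> x = \<infinity>"
  by (cases x) (auto simp: edist_def split: if_splits)

lemma edist_gt: "edist x y < ereal c \<Longrightarrow> y > ereal M \<Longrightarrow> x > ereal (M - c)"
proof (cases y)
  case (real q)
  assume "edist x y < ereal c" "y > ereal M"
  then obtain x' where "x = ereal x'" "\<bar>x' - q\<bar> < c" using edist_lt_real real by blast
  then show ?thesis using \<open>y > ereal M\<close> real by auto
next
  case PInf
  assume "edist x y < ereal c"
  then have "x = \<infinity>" using edist_lt_pinf PInf by auto
  then show ?thesis by simp
next
  case MInf
  assume "y > ereal M" then show ?thesis using MInf by auto
qed

lemma ucc_pointwise: "ucc fs f \<Longrightarrow> 0 \<le> t \<Longrightarrow> (\<lambda>n. fs n t) \<longlonglongrightarrow> f t"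
  unfolding ucc_def
proof -
  assume u: "\<forall>T. \<forall>\<epsilon>>0. \<forall>\<^sub>F n in sequentially. \<forall>s\<in>{0..T}. \<bar>fs n s - f s\<bar> < \<epsilon>" and t: "0 \<le> t"
  show ?thesis
  proof (rule tendstoI)
    fix e :: real assume "e > 0"
    from u[rule_format, OF this, of t] show "\<forall>\<^sub>F n in sequentially. dist (fs n t) (f t) < e"
      by eventually_elim (use t in \<open>auto simp: dist_real_def\<close>)
  qed
qed

lemma ucc_uminus: "ucc fs f \<Longrightarrow> ucc (\<lambda>n x. - fs n x) (\<lambda>x. - f x)"
  unfolding ucc_def by (simp add: abs_minus_commute)

lemma ucc_ereal_uminus: "ucc_ereal fs f \<Longrightarrow> ucc_ereal (\<lambda>n x. - fs n x) (\<lambda>x. - f x)"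
  unfolding ucc_ereal_def by (simp add: edist_uminus)

lemma ucc_diff: "ucc fs f \<Longrightarrow> ucc gs g \<Longrightarrow> ucc (\<lambda>n x. fs n x - gs n x) (\<lambda>x. f x - g x)"
  unfolding ucc_def
proof (intro allI impI)
  fix T and e :: real
  assume a: "\<forall>T. \<forall>\<epsilon>>0. \<forall>\<^sub>F n in sequentially. \<forall>s\<in>{0..T}. \<bar>fs n s - f s\<bar> < \<epsilon>"
    and b: "\<forall>T. \<forall>\<epsilon>>0. \<forall>\<^sub>F n in sequentially. \<forall>s\<in>{0..T}. \<bar>gs n s - g s\<bar> < \<epsilon>" and e: "e > 0"
  have e2: "e/2 > 0" using e by simp
  from a[rule_format, OF e2, of T] b[rule_format, OF e2, of T]
  show "\<forall>\<^sub>F n in sequentially. \<forall>s\<in>{0..T}. \<bar>fs n s - gs n s - (f s - g s)\<bar> < e"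
  proof eventually_elim
    case (elim n)
    show ?case
    proof
      fix s assume "s \<in> {0..T}"
      with elim have "\<bar>fs n s - f s\<bar> < e/2" "\<bar>gs n s - g s\<bar> < e/2" by auto
      then show "\<bar>fs n s - gs n s - (f s - g s)\<bar> < e" by linarith
    qed
  qed
qed

lemma ucc_cong: "ucc fs f \<Longrightarrow> (\<And>n x. 0 \<le> x \<Longrightarrow> gs n x = fs n x) \<Longrightarrow> ucc gs f"
  unfolding ucc_def by (auto elim!: eventually_mono)

lemma cadlag_diff: "cadlag f \<Longrightarrow> cadlag g \<Longrightarrow> cadlag (\<lambda>x. f x - g x)"
  unfolding cadlag_def
proof (intro conjI allI impI)
  fix t :: real
  assume "(\<forall>t\<ge>0. continuous (at_right t) f) \<and> (\<forall>t>0. \<exists>L. (f \<longlongrightarrow> L) (at_left t))"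
    "(\<forall>t\<ge>0. continuous (at_right t) g) \<and> (\<forall>t>0. \<exists>L. (g \<longlongrightarrow> L) (at_left t))"
  note h = this
  { assume "0 \<le> t" then show "continuous (at_right t) (\<lambda>x. f x - g x)"
      using h by (auto intro: continuous_diff) }
  { assume "0 < t"
    then obtain L1 L2 where "(f \<longlongrightarrow> L1) (at_left t)" "(g \<longlongrightarrow> L2) (at_left t)" using h by blast
    then show "\<exists>L. ((\<lambda>x. f x - g x) \<longlongrightarrow> L) (at_left t)" by (blast intro: tendsto_diff) }
qed

lemma cadlag_uminus: "cadlag f \<Longrightarrow> cadlag (\<lambda>x. - f x)"
  unfolding cadlag_def
proof (intro conjI allI impI)
  fix t :: real
  assume h: "(\<forall>t\<ge>0. continuous (at_right t) f) \<and> (\<forall>t>0. \<exists>L. (f \<longlongrightarrow> L) (at_left t))"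
  { assume "0 \<le> t" then show "continuous (at_right t) (\<lambda>x. - f x)"
      using h by (auto intro: continuous_minus) }
  { assume "0 < t"
    then obtain L1 where "(f \<longlongrightarrow> L1) (at_left t)" using h by blast
    then show "\<exists>L. ((\<lambda>x. - f x) \<longlongrightarrow> L) (at_left t)" by (blast intro: tendsto_minus) }
qed



lemma ucc_leftlim:
  fixes Ln :: "nat \<Rightarrow> real" and L :: real
  assumes u: "ucc fs f" and t: "t > 0" and Ln: "\<And>n. (fs n \<longlongrightarrow> Ln n) (at_left t)"
    and L: "(f \<longlongrightarrow> L) (at_left t)"
  shows "Ln \<longlonglongrightarrow> L"
proof (rule tendstoI)
  fix e :: real assume e: "e > 0"
  then have e2: "e/2 > 0" by simp
  from u[unfolded ucc_def, rule_format, OF e2, of t]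
  show "\<forall>\<^sub>F n in sequentially. dist (Ln n) L < e"
  proof eventually_elim
    case (elim n)
    have "((\<lambda>x. \<bar>fs n x - f x\<bar>) \<longlongrightarrow> \<bar>Ln n - L\<bar>) (at_left t)"
      by (intro tendsto_intros Ln L)
    moreover have "\<forall>\<^sub>F x in at_left t. \<bar>fs n x - f x\<bar> \<le> e/2"
      using eventually_at_left_real[OF t]
    proof eventually_elim
      case (elim x)
      with \<open>\<forall>s\<in>{0..t}. \<bar>fs n s - f s\<bar> < e/2\<close> have "\<bar>fs n x - f x\<bar> < e/2" by auto
      then show ?case by simp
    qed
    ultimately have "\<bar>Ln n - L\<bar> \<le> e/2" by (rule tendsto_upperbound) simp
    then show ?case using e by (simp add: dist_real_def)
  qed
qed

lemma ucc_cadlag: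
  assumes u: "ucc fs f" and c: "\<And>n. cadlag (fs n)"
  shows "cadlag f"
  unfolding cadlag_def
proof (intro conjI allI impI)
  fix t :: real assume t: "0 \<le> t"
  show "continuous (at_right t) f"
    unfolding continuous_within
  proof (rule tendstoI)
    fix e :: real assume e: "e > 0"
    then have e3: "e/3 > 0" by simp
    from u[unfolded ucc_def, rule_format, OF e3, of "t+1"] obtain N0 where
      "\<forall>n\<ge>N0. \<forall>s\<in>{0..t+1}. \<bar>fs n s - f s\<bar> < e/3"
      unfolding eventually_sequentially by blast
    then obtain N where N: "\<And>s. s \<in> {0..t+1} \<Longrightarrow> \<bar>fs N s - f s\<bar> < e/3" by blast
    have "continuous (at_right t) (fs N)" using c[of N] t by (auto simp: cadlag_def)
    then have "((fs N) \<longlongrightarrow> fs N t) (at_right t)" by (simp add: continuous_within)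
    from tendstoD[OF this e3] eventually_at_right_real[of t "t+1", OF less_add_one]
    show "\<forall>\<^sub>F x in at_right t. dist (f x) (f t) < e"
    proof eventually_elim
      case (elim x)
      then have "\<bar>fs N x - f x\<bar> < e/3" "\<bar>fs N t - f t\<bar> < e/3" using N t by auto
      with elim show ?case unfolding dist_real_def by linarith
    qed
  qed
next
  fix t :: real assume t: "0 < t"
  define Ln where "Ln n = (SOME L. (fs n \<longlongrightarrow> L) (at_left t))" for n
  have Ln: "(fs n \<longlongrightarrow> Ln n) (at_left t)" for n
  proof -
    have "\<exists>L. (fs n \<longlongrightarrow> L) (at_left t)" using c[of n] t by (auto simp: cadlag_def)
    then show ?thesis unfolding Ln_def by (rule someI_ex)
  qed
  have "Cauchy Ln"
  proof (rule metric_CauchyI)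
    fix e :: real assume e: "e > 0"
    then have e4: "e/4 > 0" by simp
    from u[unfolded ucc_def, rule_format, OF e4, of t] obtain N where
      N: "\<And>n s. n \<ge> N \<Longrightarrow> s \<in> {0..t} \<Longrightarrow> \<bar>fs n s - f s\<bar> < e/4"
      unfolding eventually_sequentially by blast
    show "\<exists>M. \<forall>m\<ge>M. \<forall>n\<ge>M. dist (Ln m) (Ln n) < e"
    proof (intro exI allI impI)
      fix m n assume mn: "m \<ge> N" "n \<ge> N"
      have "((\<lambda>x. \<bar>fs m x - fs n x\<bar>) \<longlongrightarrow> \<bar>Ln m - Ln n\<bar>) (at_left t)"
        by (intro tendsto_intros Ln)
      moreover have "\<forall>\<^sub>F x in at_left t. \<bar>fs m x - fs n x\<bar> \<le> e/2"
        using eventually_at_left_real[OF t]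
      proof eventually_elim
        case (elim x)
        then have "\<bar>fs m x - f x\<bar> < e/4" "\<bar>fs n x - f x\<bar> < e/4" using N mn by auto
        then show ?case by linarith
      qed
      ultimately have "\<bar>Ln m - Ln n\<bar> \<le> e/2" by (rule tendsto_upperbound) simp
      then show "dist (Ln m) (Ln n) < e" using e by (simp add: dist_real_def)
    qed
  qed
  then obtain L where L: "Ln \<longlonglongrightarrow> L" using Cauchy_convergent_iff convergent_def by blast
  have "(f \<longlongrightarrow> L) (at_left t)"
  proof (rule tendstoI)
    fix e :: real assume e: "e > 0"
    then have e3: "e/3 > 0" by simp
    from u[unfolded ucc_def, rule_format, OF e3, of t] tendstoD[OF L e3]
    have "\<forall>\<^sub>F n in sequentially. (\<forall>s\<in>{0..t}. \<bar>fs n s - f s\<bar> < e/3) \<and> dist (Ln n) L < e/3"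
      by (rule eventually_conj)
    then obtain N where N: "\<And>s. s \<in> {0..t} \<Longrightarrow> \<bar>fs N s - f s\<bar> < e/3" "dist (Ln N) L < e/3"
      unfolding eventually_sequentially by blast
    from tendstoD[OF Ln[of N] e3] eventually_at_left_real[OF t]
    show "\<forall>\<^sub>F x in at_left t. dist (f x) L < e"
    proof eventually_elim
      case (elim x)
      then have "\<bar>fs N x - f x\<bar> < e/3" using N by auto
      with elim N(2) show ?case unfolding dist_real_def by linarith
    qed
  qed
  then show "\<exists>L. (f \<longlongrightarrow> L) (at_left t)" by blast
qed



lemma mono_local:
  fixes f :: "real \<Rightarrow> real"
  assumes ab: "a \<le> b"
    and R: "\<And>u. u \<in> {a..b} \<Longrightarrow> \<exists>\<delta>>0. \<forall>x y. u \<le> x \<longrightarrow> x \<le> y \<longrightarrow> y < u + \<delta> \<longrightarrow> f x \<le> f y"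
    and J: "\<And>u L. u \<in> {a<..b} \<Longrightarrow> (f \<longlongrightarrow> L) (at_left u) \<Longrightarrow> L \<le> f u"
    and LL: "\<And>u. u \<in> {a<..b} \<Longrightarrow> \<exists>L. (f \<longlongrightarrow> L) (at_left u)"
  shows "f a \<le> f b"
proof -
  define S where "S = {x\<in>{a..b}. \<forall>y\<in>{a..x}. f a \<le> f y}"
  define c where "c = Sup S"
  have aS: "a \<in> S" using ab by (auto simp: S_def)
  have bdd: "bdd_above S" by (auto simp: S_def bdd_above_def)
  have ac: "a \<le> c" unfolding c_def using aS bdd by (rule cSup_upper)
  have cb: "c \<le> b" unfolding c_def using aS by (intro cSup_least) (auto simp: S_def)
  have below: "f a \<le> f y" if "a \<le> y" "y < c" for y
  proof -
    from less_cSupD[of S y] aS that obtain x where "x \<in> S" "y < x" unfolding c_def by blast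
    then show ?thesis using that by (auto simp: S_def)
  qed
  have fc: "f a \<le> f c"
  proof (cases "c = a")
    case False
    then have ac': "a < c" using ac by simp
    then obtain L where L: "(f \<longlongrightarrow> L) (at_left c)" using LL[of c] cb by auto
    have "\<forall>\<^sub>F y in at_left c. f a \<le> f y"
      using eventually_at_left_real[OF ac'] by eventually_elim (auto intro: below)
    then have "f a \<le> L" using L by (intro tendsto_lowerbound[OF L]) auto
    also have "L \<le> f c" using J[OF _ L] ac' cb by auto
    finally show ?thesis .
  qed simp
  have cS: "c \<in> S"
    using ac cb below fc by (auto simp: S_def) (metis antisym_conv2)
  have "c = b"
  proof (rule ccontr)
    assume "c \<noteq> b"
    then have cb': "c < b" using cb by simp
    obtain \<delta> where d: "\<delta> > 0" "\<forall>x y. c \<le> x \<longrightarrow> x \<le> y \<longrightarrow> y < c + \<delta> \<longrightarrow> f x \<le> f y"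
      using R[of c] ac cb by auto
    define x where "x = min (c + \<delta>/2) b"
    have xc: "x > c" using d cb' by (simp add: x_def)
    have "x \<in> S"
      unfolding S_def
    proof (intro CollectI conjI ballI)
      show "x \<in> {a..b}" using xc ac by (auto simp: x_def)
      fix y assume y: "y \<in> {a..x}"
      show "f a \<le> f y"
      proof (cases "y \<le> c")
        case True then show ?thesis using cS y by (auto simp: S_def)
      next
        case False
        then have "f c \<le> f y" using d y by (auto simp: x_def)
        then show ?thesis using fc by simp
      qed
    qed
    then have "x \<le> c" unfolding c_def using bdd by (rule cSup_upper)
    then show False using xc by simp
  qed
  then show ?thesis using cS ab by (auto simp: S_def)
qed



context
  fixes rs :: "nat \<Rightarrow> real \<Rightarrow> ereal" and r :: "real \<Rightarrow> ereal"
    and phis psis etas :: "nat \<Rightarrow> real \<Rightarrow> real" and phi psi :: "real \<Rightarrow> real"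
  assumes cE: "\<And>n. cadlag (etas n)"
    and E: "\<And>n t. 0 \<le> t \<Longrightarrow> etas n t = phis n t - psis n t"
    and A3: "\<And>n s t. 0 \<le> s \<Longrightarrow> s \<le> t \<Longrightarrow> (\<forall>u\<in>{s<..t}. ereal (phis n u) < rs n u) \<Longrightarrow> etas n s \<le> etas n t"
    and A4a: "\<And>n. ereal (phis n 0) < rs n 0 \<Longrightarrow> 0 \<le> etas n 0"
    and A4b: "\<And>n t L. 0 < t \<Longrightarrow> ereal (phis n t) < rs n t \<Longrightarrow> (etas n \<longlongrightarrow> L) (at_left t) \<Longrightarrow> L \<le> etas n t"
    and uphi: "ucc phis phi" and upsi: "ucc psis psi" and ur: "ucc_ereal rs r"
    and cphi: "cadlag phi" and cpsi: "cadlag psi"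
    and cr: "\<And>t. 0 \<le> t \<Longrightarrow> (r \<longlongrightarrow> r t) (at_right t)"
begin

private lemma ueta: "ucc etas (\<lambda>x. phi x - psi x)"
  by (rule ucc_cong[OF ucc_diff[OF uphi upsi]]) (simp add: E)

private lemma ceta: "cadlag (\<lambda>x. phi x - psi x)"
  by (rule cadlag_diff[OF cphi cpsi])

private lemma ev_below:
  assumes u: "0 \<le> u" and pr: "ereal (phi u) < r u"
  shows "\<exists>b>u. \<forall>\<^sub>F n in sequentially. \<forall>v\<in>{u..<b}. ereal (phis n v) < rs n v"
proof -
  obtain M1 where M1: "ereal (phi u) < ereal M1" "ereal M1 < r u" using ereal_dense2[OF pr] by blast
  obtain M2 where M2: "ereal M1 < ereal M2" "ereal M2 < r u" using ereal_dense2[OF M1(2)] by blast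
  have "(phi \<longlongrightarrow> phi u) (at_right u)" using cphi u by (auto simp: cadlag_def continuous_within)
  then have ev1: "\<forall>\<^sub>F v in at_right u. phi v < M1" using M1 by (intro order_tendstoD(2)) auto
  have ev2: "\<forall>\<^sub>F v in at_right u. ereal M2 < r v" using cr[OF u] M2 by (intro order_tendstoD(1)) auto
  obtain b where b: "b > u" "\<And>v. u < v \<Longrightarrow> v < b \<Longrightarrow> phi v < M1 \<and> ereal M2 < r v"
    using eventually_conj[OF ev1 ev2] eventually_at_right[of u "u+1"] by auto
  have bv: "phi v < M1 \<and> ereal M2 < r v" if "v \<in> {u..<b}" for v
    using that b M1 M2 by (cases "v = u") auto
  define c where "c = (M2 - M1) / 2"
  have c: "c > 0" using M2 by (simp add: c_def)
  from uphi[unfolded ucc_def, rule_format, OF c, of b] ur[unfolded ucc_ereal_def, rule_format, OF c, of b]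
  have "\<forall>\<^sub>F n in sequentially. \<forall>v\<in>{u..<b}. ereal (phis n v) < rs n v"
  proof eventually_elim
    case (elim n)
    show ?case
    proof
      fix v assume v: "v \<in> {u..<b}"
      then have v0: "v \<in> {0..b}" using u by auto
      have "\<bar>phis n v - phi v\<bar> < c" using elim v0 by auto
      moreover have "phi v < M1" using bv[OF v] by simp
      ultimately have "phis n v < M2 - c" unfolding c_def abs_less_iff by (auto simp: field_simps)
      moreover have "rs n v > ereal (M2 - c)" using elim v0 bv[OF v] by (intro edist_gt) auto
      ultimately show "ereal (phis n v) < rs n v" using order.strict_trans[of "ereal (phis n v)" "ereal (M2 - c)"] by simp
    qed
  qed
  then show ?thesis using b by blast
qed

private lemma locR:
  assumes u: "0 \<le> u" and pr: "ereal (phi u) < r u"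
  shows "\<exists>\<delta>>0. \<forall>x y. u \<le> x \<longrightarrow> x \<le> y \<longrightarrow> y < u + \<delta> \<longrightarrow> phi x - psi x \<le> phi y - psi y"
proof -
  obtain b where b: "b > u" and ev: "\<forall>\<^sub>F n in sequentially. \<forall>v\<in>{u..<b}. ereal (phis n v) < rs n v"
    using ev_below[OF u pr] by blast
  show ?thesis
  proof (intro exI conjI allI impI)
    show "b - u > 0" using b by simp
    fix x y assume xy: "u \<le> x" "x \<le> y" "y < u + (b - u)"
    have "\<forall>\<^sub>F n in sequentially. etas n x \<le> etas n y"
      using ev by eventually_elim (rule A3, use u xy in auto)
    then show "phi x - psi x \<le> phi y - psi y"
      using ucc_pointwise[OF ueta, of x] ucc_pointwise[OF ueta, of y] u xy
      by (intro tendsto_le[of sequentially "\<lambda>n. etas n y" _ "\<lambda>n. etas n x"]) auto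
  qed
qed

private lemma locJ:
  assumes u: "0 < u" and pr: "ereal (phi u) < r u" and L: "((\<lambda>x. phi x - psi x) \<longlongrightarrow> L) (at_left u)"
  shows "L \<le> phi u - psi u"
proof -
  define Ln where "Ln n = (SOME L. (etas n \<longlongrightarrow> L) (at_left u))" for n
  have Ln: "(etas n \<longlongrightarrow> Ln n) (at_left u)" for n
  proof -
    have "\<exists>L. (etas n \<longlongrightarrow> L) (at_left u)" using cE[of n] u by (auto simp: cadlag_def)
    then show ?thesis unfolding Ln_def by (rule someI_ex)
  qed
  have LnL: "Ln \<longlonglongrightarrow> L" by (rule ucc_leftlim[OF ueta u Ln L])
  obtain b where b: "b > u" and ev: "\<forall>\<^sub>F n in sequentially. \<forall>v\<in>{u..<b}. ereal (phis n v) < rs n v"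
    using ev_below[of u] u pr by auto
  have "\<forall>\<^sub>F n in sequentially. Ln n \<le> etas n u"
    using ev by eventually_elim (rule A4b[OF u _ Ln], use b in auto)
  then show ?thesis
    using ucc_pointwise[OF ueta, of u] u LnL
    by (intro tendsto_le[of sequentially "\<lambda>n. etas n u" _ Ln]) auto
qed

lemma upper_C2a: "ereal (phi 0) < r 0 \<Longrightarrow> 0 \<le> phi 0 - psi 0"
proof -
  assume pr: "ereal (phi 0) < r 0"
  obtain b where b: "b > 0" and ev: "\<forall>\<^sub>F n in sequentially. \<forall>v\<in>{0..<b}. ereal (phis n v) < rs n v"
    using ev_below[of 0] pr by auto
  have "\<forall>\<^sub>F n in sequentially. 0 \<le> etas n 0"
    using ev by eventually_elim (rule A4a, use b in auto)
  then show ?thesis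
    using ucc_pointwise[OF ueta, of 0] by (intro tendsto_lowerbound) auto
qed

lemma upper_C2b: "0 < t \<Longrightarrow> ereal (phi t) < r t \<Longrightarrow> ((\<lambda>x. phi x - psi x) \<longlongrightarrow> L) (at_left t)
   \<Longrightarrow> L \<le> phi t - psi t"
  by (rule locJ)

lemma upper_C1:
  assumes s: "0 \<le> s" "s \<le> t" and H: "\<forall>u\<in>{s<..t}. ereal (phi u) < r u"
  shows "phi s - psi s \<le> phi t - psi t"
proof (cases "s = t")
  case False
  then have st: "s < t" using s by simp
  define f where "f x = phi x - psi x" for x
  have mid: "f s' \<le> f t" if s': "s' \<in> {s<..t}" for s'
    unfolding f_def
  proof (rule mono_local[where f="\<lambda>x. phi x - psi x"])
    show "s' \<le> t" using s' by simp
  next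
    fix u assume u: "u \<in> {s'..t}"
    then show "\<exists>\<delta>>0. \<forall>x y. u \<le> x \<longrightarrow> x \<le> y \<longrightarrow> y < u + \<delta> \<longrightarrow> phi x - psi x \<le> phi y - psi y"
      using locR[of u] H s s' by auto
  next
    fix u L assume u: "u \<in> {s'<..t}" "((\<lambda>x. phi x - psi x) \<longlongrightarrow> L) (at_left u)"
    then show "L \<le> phi u - psi u" using locJ[of u L] H s s' by auto
  next
    fix u assume u: "u \<in> {s'<..t}"
    then show "\<exists>L. ((\<lambda>x. phi x - psi x) \<longlongrightarrow> L) (at_left u)"
      using ceta s s' by (auto simp: cadlag_def)
  qed
  have "(f \<longlongrightarrow> f s) (at_right s)" using ceta s unfolding f_def by (auto simp: cadlag_def continuous_within)
  moreover have "\<forall>\<^sub>F x in at_right s. f x \<le> f t"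
    using eventually_at_right_real[OF st] by eventually_elim (rule mid, auto)
  ultimately have "f s \<le> f t" by (rule tendsto_upperbound) simp
  then show ?thesis by (simp add: f_def)
qed simp

end


lemma neg_less: "ereal (- x) < - a \<longleftrightarrow> a < ereal x"
  by (cases a) auto

lemma lim_bound:
  assumes uy: "ucc_ereal xs y" and up: "ucc ps p" and t: "0 \<le> t"
    and le: "\<And>n. xs n t \<le> ereal (ps n t)"
  shows "y t \<le> ereal (p t)"
proof (rule ccontr)
  assume "\<not> y t \<le> ereal (p t)"
  then have "ereal (p t) < y t" by simp
  then obtain M where M: "ereal (p t) < ereal M" "ereal M < y t" using ereal_dense2 by blast
  define c where "c = (M - p t) / 2"
  have c: "c > 0" using M by (simp add: c_def)
  from uy[unfolded ucc_ereal_def, rule_format, OF c, of t] up[unfolded ucc_def, rule_format, OF c, of t]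
  have "\<forall>\<^sub>F n in sequentially. edist (xs n t) (y t) < ereal c \<and> \<bar>ps n t - p t\<bar> < c"
    by eventually_elim (use t in auto)
  then obtain n where n: "edist (xs n t) (y t) < ereal c" "\<bar>ps n t - p t\<bar> < c"
    unfolding eventually_sequentially by blast
  have "xs n t > ereal (M - c)" using n(1) M(2) by (rule edist_gt)
  moreover have "ps n t < M - c" using n(2) unfolding c_def abs_less_iff by (auto simp: field_simps)
  ultimately have "ereal (ps n t) < xs n t" using order.strict_trans[of "ereal (ps n t)" "ereal (M - c)"] by simp
  then show False using le[of n] by simp
qed

theorem proposition2p5:
  fixes ls rs :: "nat \<Rightarrow> real \<Rightarrow> ereal"
    and psis phis etas :: "nat \<Rightarrow> real \<Rightarrow> real"
    and l r :: "real \<Rightarrow> ereal"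
    and psi phi :: "real \<Rightarrow> real"
  assumes "\<And>n. cadlag_minus (ls n)"
    and "\<And>n. cadlag_plus (rs n)"
    and "\<And>n t. 0 \<le> t \<Longrightarrow> ls n t \<le> rs n t"
    and "\<And>n. cadlag (psis n)"
    and "cadlag_minus l" and "cadlag_plus r" and "cadlag psi"
    and "ucc psis psi" and "ucc_ereal ls l" and "ucc_ereal rs r"
    and "\<And>n. ESP (ls n) (rs n) (psis n) (phis n) (etas n)"
    and "ucc phis phi"
  shows "ESP l r psi phi (\<lambda>t. phi t - psi t)"
proof -
  note cl = assms(5) and cr = assms(6) and cpsi = assms(7) and upsi = assms(8)
    and ul = assms(9) and ur = assms(10) and esp = assms(11) and uphi = assms(12)
  have cphis: "cadlag (phis n)" for n using esp[of n] by (simp add: ESP_def)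
  have cetas: "cadlag (etas n)" for n using esp[of n] by (simp add: ESP_def)
  have dec: "phis n t = psis n t + etas n t" "ls n t \<le> ereal (phis n t)" "ereal (phis n t) \<le> rs n t"
    if "0 \<le> t" for n t using esp[of n] that by (auto simp: ESP_def)
  have c2: "\<And>s t. 0 \<le> s \<Longrightarrow> s \<le> t \<Longrightarrow>
        ((\<forall>u\<in>{s<..t}. ereal (phis n u) < rs n u) \<longrightarrow> etas n t - etas n s \<ge> 0) \<and>
        ((\<forall>u\<in>{s<..t}. ereal (phis n u) > ls n u) \<longrightarrow> etas n t - etas n s \<le> 0)" for n
    using esp[of n] by (simp add: ESP_def)
  have c3: "\<And>t. 0 \<le> t \<Longrightarrow> (ereal (phis n t) < rs n t \<longrightarrow> etas n t - (if t = 0 then 0 else Lim (at_left t) (etas n)) \<ge> 0) \<and>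
        (ereal (phis n t) > ls n t \<longrightarrow> etas n t - (if t = 0 then 0 else Lim (at_left t) (etas n)) \<le> 0)" for n
    using esp[of n] by (simp add: ESP_def Let_def)
  have cphi: "cadlag phi" by (rule ucc_cadlag[OF uphi cphis])
  have ceta: "cadlag (\<lambda>t. phi t - psi t)" by (rule cadlag_diff[OF cphi cpsi])
  have crr: "(r \<longlongrightarrow> r t) (at_right t)" if "0 \<le> t" for t
    using cr that by (auto simp: cadlag_plus_def continuous_within)
  have cll: "((\<lambda>x. - l x) \<longlongrightarrow> - l t) (at_right t)" if "0 \<le> t" for t
    using cl that by (auto simp: cadlag_minus_def continuous_within)
  note U = upper_C1[where etas=etas and phis=phis and psis=psis and rs=rs and r=r and phi=phi and psi=psi] upper_C2a[where etas=etas and phis=phis and psis=psis and rs=rs and r=r and phi=phi and psi=psi]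
    upper_C2b[where etas=etas and phis=phis and psis=psis and rs=rs and r=r and phi=phi and psi=psi]
  note Lw = upper_C1[where etas="\<lambda>n x. - etas n x" and phis="\<lambda>n x. - phis n x" and psis="\<lambda>n x. - psis n x" and rs="\<lambda>n x. - ls n x" and r="\<lambda>x. - l x" and phi="\<lambda>x. - phi x" and psi="\<lambda>x. - psi x"]
    upper_C2a[where etas="\<lambda>n x. - etas n x" and phis="\<lambda>n x. - phis n x" and psis="\<lambda>n x. - psis n x" and rs="\<lambda>n x. - ls n x" and r="\<lambda>x. - l x" and phi="\<lambda>x. - phi x" and psi="\<lambda>x. - psi x"]
    upper_C2b[where etas="\<lambda>n x. - etas n x" and phis="\<lambda>n x. - phis n x" and psis="\<lambda>n x. - psis n x" and rs="\<lambda>n x. - ls n x" and r="\<lambda>x. - l x" and phi="\<lambda>x. - phi x" and psi="\<lambda>x. - psi x"]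
  have hE: "\<And>n t. 0 \<le> t \<Longrightarrow> etas n t = phis n t - psis n t" using dec by simp
  have hA3: "\<And>n s t. 0 \<le> s \<Longrightarrow> s \<le> t \<Longrightarrow> (\<forall>u\<in>{s<..t}. ereal (phis n u) < rs n u) \<Longrightarrow> etas n s \<le> etas n t"
    using c2 by fastforce
  have hA4a: "\<And>n. ereal (phis n 0) < rs n 0 \<Longrightarrow> 0 \<le> etas n 0" using c3 by fastforce
  have hA4b: "\<And>n t L. 0 < t \<Longrightarrow> ereal (phis n t) < rs n t \<Longrightarrow> (etas n \<longlongrightarrow> L) (at_left t) \<Longrightarrow> L \<le> etas n t"
  proof -
    fix n t L assume t: "0 < t" and p: "ereal (phis n t) < rs n t" and L: "(etas n \<longlongrightarrow> L) (at_left t)"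
    have "Lim (at_left t) (etas n) = L" by (rule tendsto_Lim[OF _ L]) simp
    then show "L \<le> etas n t" using c3[of t n] t p by simp
  qed
  have nE: "\<And>n t. 0 \<le> t \<Longrightarrow> - etas n t = - phis n t - - psis n t" using dec by simp
  have nA3: "\<And>n s t. 0 \<le> s \<Longrightarrow> s \<le> t \<Longrightarrow> (\<forall>u\<in>{s<..t}. ereal (- phis n u) < - ls n u) \<Longrightarrow> - etas n s \<le> - etas n t"
    using c2 by (fastforce simp: neg_less)
  have nA4a: "\<And>n. ereal (- phis n 0) < - ls n 0 \<Longrightarrow> 0 \<le> - etas n 0" using c3 by (fastforce simp: neg_less)
  have nA4b: "\<And>n t L. 0 < t \<Longrightarrow> ereal (- phis n t) < - ls n t \<Longrightarrow> ((\<lambda>x. - etas n x) \<longlongrightarrow> L) (at_left t) \<Longrightarrow> L \<le> - etas n t"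
  proof -
    fix n t L assume t: "0 < t" and p: "ereal (- phis n t) < - ls n t" and L: "((\<lambda>x. - etas n x) \<longlongrightarrow> L) (at_left t)"
    have "(etas n \<longlongrightarrow> - L) (at_left t)" using tendsto_minus[OF L] by simp
    then have "Lim (at_left t) (etas n) = - L" by (rule tendsto_Lim[rotated]) simp
    then show "L \<le> - etas n t" using c3[of t n] t p by (simp add: neg_less)
  qed
  note U' = U[OF cetas hE hA3 hA4a hA4b uphi upsi ur cphi cpsi crr]
  note Lw' = Lw[OF cadlag_uminus[OF cetas] nE nA3 nA4a nA4b ucc_uminus[OF uphi] ucc_uminus[OF upsi]
     ucc_ereal_uminus[OF ul] cadlag_uminus[OF cphi] cadlag_uminus[OF cpsi] cll]
  have U1: "\<And>s t. 0 \<le> s \<Longrightarrow> s \<le> t \<Longrightarrow> \<forall>u\<in>{s<..t}. ereal (phi u) < r u \<Longrightarrow> phi s - psi s \<le> phi t - psi t"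
    by (rule U'(1)) auto
  have U2: "ereal (phi 0) < r 0 \<Longrightarrow> 0 \<le> phi 0 - psi 0"
    by (rule U'(2)) auto
  have U3: "\<And>t L. 0 < t \<Longrightarrow> ereal (phi t) < r t \<Longrightarrow> ((\<lambda>x. phi x - psi x) \<longlongrightarrow> L) (at_left t) \<Longrightarrow> L \<le> phi t - psi t"
    by (rule U'(3)) auto
  have L1: "\<And>s t. 0 \<le> s \<Longrightarrow> s \<le> t \<Longrightarrow> \<forall>u\<in>{s<..t}. ereal (- phi u) < - l u \<Longrightarrow> - phi s - - psi s \<le> - phi t - - psi t"
    by (rule Lw'(1)) auto
  have L2: "ereal (- phi 0) < - l 0 \<Longrightarrow> 0 \<le> - phi 0 - - psi 0"
    by (rule Lw'(2)) auto
  have L3: "\<And>t L. 0 < t \<Longrightarrow> ereal (- phi t) < - l t \<Longrightarrow> ((\<lambda>x. - phi x - - psi x) \<longlongrightarrow> L) (at_left t) \<Longrightarrow> L \<le> - phi t - - psi t"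
    by (rule Lw'(3)) auto
  show ?thesis
    unfolding ESP_def Let_def
  proof (intro conjI allI impI)
    show "cadlag phi" by (rule cphi)
    show "cadlag (\<lambda>t. phi t - psi t)" by (rule ceta)
  next
    fix t :: real assume t: "0 \<le> t"
    show "phi t = psi t + (phi t - psi t)" by simp
    show "l t \<le> ereal (phi t)" using lim_bound[OF ul uphi t] dec(2)[OF t] by blast
    have "(\<lambda>x. - r x) t \<le> ereal ((\<lambda>x. - phi x) t)"
      by (rule lim_bound[OF ucc_ereal_uminus[OF ur] ucc_uminus[OF uphi] t]) (use dec(3)[OF t] in \<open>metis ereal_minus_le_minus uminus_ereal.simps(1)\<close>)
    then show "ereal (phi t) \<le> r t" by (cases "r t") auto
  next
    fix s t :: real assume st: "0 \<le> s \<and> s \<le> t"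
    { assume "\<forall>u\<in>{s<..t}. ereal (phi u) < r u"
      then show "0 \<le> phi t - psi t - (phi s - psi s)" using U1[of s t] st by simp }
    { assume "\<forall>u\<in>{s<..t}. l u < ereal (phi u)"
      then have "\<forall>u\<in>{s<..t}. ereal (- phi u) < - l u" by (simp add: neg_less)
      then show "phi t - psi t - (phi s - psi s) \<le> 0" using L1[of s t] st by simp }
  next
    fix t :: real assume t: "0 \<le> t"
    { assume p: "ereal (phi t) < r t"
      show "0 \<le> phi t - psi t - (if t = 0 then 0 else Lim (at_left t) (\<lambda>t. phi t - psi t))"
      proof (cases "t = 0")
        case True then show ?thesis using U2 p by simp
      next
        case False
        then have t': "0 < t" using t by simp
        then obtain L where L: "((\<lambda>t. phi t - psi t) \<longlongrightarrow> L) (at_left t)" using ceta by (auto simp: cadlag_def)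
        have "Lim (at_left t) (\<lambda>t. phi t - psi t) = L" by (rule tendsto_Lim[OF _ L]) simp
        then show ?thesis using U3[OF t' p L] False by simp
      qed }
    { assume p: "l t < ereal (phi t)"
      then have p': "ereal (- phi t) < - l t" by (simp add: neg_less)
      show "phi t - psi t - (if t = 0 then 0 else Lim (at_left t) (\<lambda>t. phi t - psi t)) \<le> 0"
      proof (cases "t = 0")
        case True then show ?thesis using L2 p' by simp
      next
        case False
        then have t': "0 < t" using t by simp
        then obtain L where L: "((\<lambda>t. phi t - psi t) \<longlongrightarrow> L) (at_left t)" using ceta by (auto simp: cadlag_def)
        have "Lim (at_left t) (\<lambda>t. phi t - psi t) = L" by (rule tendsto_Lim[OF _ L]) simp
        moreover have "((\<lambda>x. - phi x - - psi x) \<longlongrightarrow> - L) (at_left t)" using tendsto_minus[OF L] by simp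
        ultimately show ?thesis using L3[OF t' p'] False by fastforce
      qed }
  qed
qed


end
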